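(* Let $f\in U^N_{\rm per}(\epsilon\mathbb Z)$ with $\langle f\rangle_X=0$, assume $0<c_\psi\le\psi\le C_\psi$ and $N/p\in\mathbb N$, and let $u$, $u^0$, $\chi$ be the solutions of the atomistic problem, the homogenized problem and the cell problem. Then the corrector $u^{\rm c}$ belongs to $U^N_{\rm per}(\epsilon\mathbb Z)$ and, with the two-scale function $w(X_i,Y_j)=\chi(X_i,Y_j)Du^0(X_i)$, \[ |\langle u^{\rm c}\rangle_X|\le\epsilon^2\frac p2\|D_Xw\|_{L^1(N,p)},\qquad |u^{\rm c}-u|_{H^1}\le\epsilon\frac{C_\psi}{c_\psi}\|D_XT_Yw\|_{L^2(N)}. \]
   Context: Let $\epsilon>0$ and $N,p$ positive integers; $X_i=\epsilon i$, $Y_j=j$. $U^N_{\rm per}(\epsilon\mathbb Z)$: functions $u:\epsilon\mathbb Z\to\mathbb R$ with $u(X_{i+N})=u(X_i)$; $U^N_\#(\epsilon\mathbb Z)$: those with $\langle u\rangle_X:=\frac1N\sum_{i=1}^Nu(X_i)=0$. $\langle u,v\rangle_X=\frac1N\sum_{i=1}^Nu(X_i)v(X_i)$, $Du(X_i)=(u(X_{i+1})-u(X_i))/\epsilon$, $|u|_{H^1}=(\frac1N\sum_{i=1}^N|Du(X_i)|^2)^{1/2}$. Two-scale functions $g:\epsilon\mathbb Z\times\mathbb Z\to\mathbb R$ satisfy $g(X_{i+N},Y_j)=g(X_i,Y_j)=g(X_i,Y_{j+p})$; $D_Xg(X_i,Y_j)=(g(X_{i+1},Y_j)-g(X_i,Y_j))/\epsilon$,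 $D_Yg(X_i,Y_j)=g(X_i,Y_{j+1})-g(X_i,Y_j)$, $T_Yg(X_i,Y_j)=g(X_i,Y_{j+1})$, $\langle g\rangle_Y(X_i)=\frac1p\sum_{j=1}^pg(X_i,Y_j)$, $\|g\|_{L^1(N,p)}=\frac1{Np}\sum_{i=1}^N\sum_{j=1}^p|g(X_i,Y_j)|$, and $\|g\|_{L^2(N)}=(\frac1N\sum_{i=1}^N|g(X_i,Y_i)|^2)^{1/2}$ (norm of the restriction to the diagonal $Y=X/\epsilon$). $\psi$ is a two-scale function; $\psi^\epsilon(X_i)=\psi(X_i,X_i/\epsilon)$; $\psi^0(X_i)=\langle1/\psi(X_i,\cdot)\rangle_Y^{-1}$. Cell problem: $\chi$ two-scale with $\langle\chi(X_i,\cdot)\rangle_Y=0$ and $-D_Y(\psi D_Y\chi)=D_Y\psi$ everywhere. Atomistic problem: $u\in U^N_\#(\epsilon\mathbb Z)$ with $\langle\psi^\epsilon Du,Dv\rangle_X=\langle f,v\rangle_X$ for all $v\in U^N_{\rm per}(\epsilon\mathbb Z)$. Homogenized problem: $u^0\in U^N_\#(\epsilon\mathbb Z)$ with $\langle\psi^0Du^0,Dv\rangle_X=\langle f,v\rangle_X$ for all $v\in U^N_{\rm per}(\epsilon\mathbb Z)$. Corrector: $u^{\rm c}(X_i)=u^0(X_i)+\epsilon\chi(X_i,X_i/\epsilon)Du^0(X_i)$. *)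

theory Defs
  imports Complex_Main
begin

(* Lattice functions u : eps*Z -> R are represented as  u :: int => real  with
   u i = u(X_i), X_i = eps*i.  Two-scale functions g : eps*Z x Z -> R are
   represented as  g :: int => int => real  with  g i j = g(X_i, Y_j), Y_j = j. *)

definition per :: "nat \<Rightarrow> (int \<Rightarrow> real) \<Rightarrow> bool" where
  "per N u \<longleftrightarrow> (\<forall>i. u (i + int N) = u i)"

definition avgX :: "nat \<Rightarrow> (int \<Rightarrow> real) \<Rightarrow> real" where
  "avgX N u = (\<Sum>i\<in>{1..int N}. u i) / real N"

definition ipX :: "nat \<Rightarrow> (int \<Rightarrow> real) \<Rightarrow> (int \<Rightarrow> real) \<Rightarrow> real" where
  "ipX N u v = (\<Sum>i\<in>{1..int N}. u i * v i) / real N"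

definition Dd :: "real \<Rightarrow> (int \<Rightarrow> real) \<Rightarrow> int \<Rightarrow> real" where
  "Dd eps u i = (u (i + 1) - u i) / eps"

definition H1semi :: "real \<Rightarrow> nat \<Rightarrow> (int \<Rightarrow> real) \<Rightarrow> real" where
  "H1semi eps N u = sqrt ((\<Sum>i\<in>{1..int N}. (Dd eps u i)\<^sup>2) / real N)"

definition twoscale :: "nat \<Rightarrow> nat \<Rightarrow> (int \<Rightarrow> int \<Rightarrow> real) \<Rightarrow> bool" where
  "twoscale N p g \<longleftrightarrow> (\<forall>i j. g (i + int N) j = g i j \<and> g i (j + int p) = g i j)"

definition DX :: "real \<Rightarrow> (int \<Rightarrow> int \<Rightarrow> real) \<Rightarrow> int \<Rightarrow> int \<Rightarrow> real" where
  "DX eps g i j = (g (i + 1) j - g i j) / eps"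

definition DY :: "(int \<Rightarrow> int \<Rightarrow> real) \<Rightarrow> int \<Rightarrow> int \<Rightarrow> real" where
  "DY g i j = g i (j + 1) - g i j"

definition TY :: "(int \<Rightarrow> int \<Rightarrow> real) \<Rightarrow> int \<Rightarrow> int \<Rightarrow> real" where
  "TY g i j = g i (j + 1)"

definition avgY :: "nat \<Rightarrow> (int \<Rightarrow> int \<Rightarrow> real) \<Rightarrow> int \<Rightarrow> real" where
  "avgY p g i = (\<Sum>j\<in>{1..int p}. g i j) / real p"

definition L1Np :: "nat \<Rightarrow> nat \<Rightarrow> (int \<Rightarrow> int \<Rightarrow> real) \<Rightarrow> real" where
  "L1Np N p g = (\<Sum>i\<in>{1..int N}. \<Sum>j\<in>{1..int p}. \<bar>g i j\<bar>) / (real N * real p)"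

(* norm of the restriction to the diagonal Y = X/eps, i.e. Y_i at X_i *)
definition L2N :: "nat \<Rightarrow> (int \<Rightarrow> int \<Rightarrow> real) \<Rightarrow> real" where
  "L2N N g = sqrt ((\<Sum>i\<in>{1..int N}. (g i i)\<^sup>2) / real N)"

(* psi^eps(X_i) = psi(X_i, X_i/eps) = psi(X_i, Y_i) *)
definition osc :: "(int \<Rightarrow> int \<Rightarrow> real) \<Rightarrow> int \<Rightarrow> real" where
  "osc g i = g i i"

definition hom_coeff :: "nat \<Rightarrow> (int \<Rightarrow> int \<Rightarrow> real) \<Rightarrow> int \<Rightarrow> real" where
  "hom_coeff p psi i = 1 / avgY p (\<lambda>i j. 1 / psi i j) i"

definition cell_problem :: "nat \<Rightarrow> nat \<Rightarrow> (int \<Rightarrow> int \<Rightarrow> real) \<Rightarrow> (int \<Rightarrow> int \<Rightarrow> real) \<Rightarrow> bool" where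
  "cell_problem N p psi chi \<longleftrightarrow> twoscale N p chi \<and> (\<forall>i. avgY p chi i = 0) \<and>
     (\<forall>i j. - DY (\<lambda>i j. psi i j * DY chi i j) i j = DY psi i j)"

definition atomistic_sol :: "real \<Rightarrow> nat \<Rightarrow> (int \<Rightarrow> real) \<Rightarrow> (int \<Rightarrow> real) \<Rightarrow> (int \<Rightarrow> real) \<Rightarrow> bool" where
  "atomistic_sol eps N a f u \<longleftrightarrow> per N u \<and> avgX N u = 0 \<and>
     (\<forall>v. per N v \<longrightarrow> ipX N (\<lambda>i. a i * Dd eps u i) (Dd eps v) = ipX N f v)"

definition corrector :: "real \<Rightarrow> (int \<Rightarrow> int \<Rightarrow> real) \<Rightarrow> (int \<Rightarrow> real) \<Rightarrow> int \<Rightarrow> real" where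
  "corrector eps chi u0 i = u0 i + eps * chi i i * Dd eps u0 i"

end

theory Submission imports Defs "HOL-Analysis.Convex" begin

lemma win_step:
  fixes h :: "int \<Rightarrow> real"
  assumes "\<forall>x. h (x + int n) = h x"
  shows "(\<Sum>i\<in>{1..int n}. h (i + (a+1))) = (\<Sum>i\<in>{1..int n}. h (i + a))"
proof -
  have e1: "(\<Sum>i\<in>{1..int n}. h (i + (a+1))) = (\<Sum>i\<in>{2..int n + 1}. h (i + a))"
    by (rule sum.reindex_bij_witness[of _ "\<lambda>i. i - 1" "\<lambda>i. i + 1"]) (auto simp: algebra_simps)
  have s1: "{1..int n + 1} = insert 1 {2..int n + 1}" by auto
  have s2: "{1..int n + 1} = insert (int n + 1) {1..int n}" by auto
  have "(\<Sum>i\<in>{1..int n + 1}. h (i + a)) = h (1 + a) + (\<Sum>i\<in>{2..int n + 1}. h (i + a))"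
    by (subst s1) simp
  moreover have "(\<Sum>i\<in>{1..int n + 1}. h (i + a)) = h (int n + 1 + a) + (\<Sum>i\<in>{1..int n}. h (i + a))"
    by (subst s2) simp
  moreover have "h (int n + 1 + a) = h (1 + a)" using assms[rule_format, of "1+a"] by (simp add: ac_simps)
  ultimately show ?thesis using e1 by (smt (verit))
qed

lemma win:
  fixes h :: "int \<Rightarrow> real"
  assumes "\<forall>x. h (x + int n) = h x"
  shows "(\<Sum>i\<in>{1..int n}. h (i + a)) = (\<Sum>i\<in>{1..int n}. h i)"
proof -
  have "(\<Sum>i\<in>{1..int n}. h (i + a)) = (\<Sum>i\<in>{1..int n}. h (i + 0))"
  proof (induct a rule: int_induct[where k=0])
    case base then show ?case by simp
  next
    case (step1 i) then show ?case using win_step[OF assms, of i] by simp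
  next
    case (step2 i) then show ?case using win_step[OF assms, of "i - 1"] by simp
  qed
  then show ?thesis by simp
qed

lemma win0:
  fixes h :: "int \<Rightarrow> real"
  assumes "\<forall>x. h (x + int n) = h x"
  shows "(\<Sum>k\<in>{0..<int n}. h (m + k)) = (\<Sum>j\<in>{1..int n}. h j)"
proof -
  have "(\<Sum>k\<in>{0..<int n}. h (m + k)) = (\<Sum>j\<in>{1..int n}. h (j + (m - 1)))"
    by (rule sum.reindex_bij_witness[of _ "\<lambda>j. j - 1" "\<lambda>k. k + 1"]) (auto simp: algebra_simps)
  also have "\<dots> = (\<Sum>j\<in>{1..int n}. h j)" by (rule win[OF assms])
  finally show ?thesis .
qed

lemma per_mult:
  assumes "\<forall>x. h (x + int p) = h x"
  shows "h (x + int p * int q) = h x"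
proof (induct q arbitrary: x)
  case 0 then show ?case by simp
next
  case (Suc q)
  have "h (x + int p * int (Suc q)) = h ((x + int p * int q) + int p)" by (simp add: algebra_simps)
  also have "\<dots> = h (x + int p * int q)" using assms by simp
  finally show ?case using Suc by simp
qed

lemma path:
  fixes x :: "int \<Rightarrow> real"
  shows "a \<le> b \<Longrightarrow> \<bar>x b - x a\<bar> \<le> (\<Sum>e\<in>{a..<b}. \<bar>x (e+1) - x e\<bar>)"
proof (induct b rule: int_ge_induct)
  case base then show ?case by simp
next
  case (step b)
  have "{a..<b+1} = insert b {a..<b}" using step by auto
  then have "(\<Sum>e\<in>{a..<b+1}. \<bar>x (e+1) - x e\<bar>) = \<bar>x (b+1) - x b\<bar> + (\<Sum>e\<in>{a..<b}. \<bar>x (e+1) - x e\<bar>)"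
    by simp
  then show ?case using step by linarith
qed

lemma path2:
  fixes x :: "int \<Rightarrow> real"
  assumes "a \<le> b" "b \<le> a + int p"
  shows "\<bar>2 * x b - x a - x (a + int p)\<bar> \<le> (\<Sum>t\<in>{0..<int p}. \<bar>x (a+t+1) - x (a+t)\<bar>)"
proof -
  have sp: "{a..<a + int p} = {a..<b} \<union> {b..<a + int p}" using assms by auto
  have "(\<Sum>e\<in>{a..<a + int p}. \<bar>x (e+1) - x e\<bar>) = (\<Sum>e\<in>{a..<b}. \<bar>x (e+1) - x e\<bar>) + (\<Sum>e\<in>{b..<a + int p}. \<bar>x (e+1) - x e\<bar>)"
    by (subst sp, rule sum.union_disjoint) auto
  moreover have "(\<Sum>e\<in>{a..<a + int p}. \<bar>x (e+1) - x e\<bar>) = (\<Sum>t\<in>{0..<int p}. \<bar>x (a+t+1) - x (a+t)\<bar>)"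
    by (rule sum.reindex_bij_witness[of _ "\<lambda>t. a + t" "\<lambda>e. e - a"]) (auto simp: algebra_simps)
  moreover have "\<bar>x b - x a\<bar> \<le> (\<Sum>e\<in>{a..<b}. \<bar>x (e+1) - x e\<bar>)" using path assms by blast
  moreover have "\<bar>x (a + int p) - x b\<bar> \<le> (\<Sum>e\<in>{b..<a + int p}. \<bar>x (e+1) - x e\<bar>)" using path assms by blast
  ultimately show ?thesis by linarith
qed


lemma diag_bound:
  fixes w :: "int \<Rightarrow> int \<Rightarrow> real" and N p :: nat
  assumes pN: "p dvd N" and pp: "p > 0"
    and wN: "\<And>i j. w (i + int N) j = w i j"
    and wp: "\<And>i j. w i (j + int p) = w i j"
    and w0: "\<And>i. (\<Sum>j\<in>{1..int p}. w i j) = 0"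
  shows "\<bar>\<Sum>i\<in>{1..int N}. w i i\<bar> \<le> (\<Sum>i\<in>{1..int N}. \<Sum>j\<in>{1..int p}. \<bar>w (i+1) j - w i j\<bar>) / 2"
proof -
  obtain q where q: "N = p * q" using pN by auto
  have wNp: "w i (j + int N) = w i j" for i j
    using per_mult[of "w i" p j q] wp q by simp
  define K where "K = {0..<int p}"
  define I where "I = {1..int N}"
  define S where "S = (\<Sum>i\<in>I. w i i)"
  define T where "T = (\<Sum>i\<in>I. \<Sum>j\<in>{1..int p}. \<bar>w (i+1) j - w i j\<bar>)"
  have wN1: "w (x + int N + 1) j = w (x+1) j" for x j using wN[of "x+1" j] by (simp add: algebra_simps)
  have wNN: "w (a + int N) (b + int N) = w a b" for a b using wN wNp by simp
  have hN: "w (x + int N) (x + int N + k) = w x (x + k)" for x k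
    using wNN[of x "x + k"] by (simp add: ac_simps)
  have hN2: "w (x + int N + (int p - k)) (x + int N + (int p - k) + k) = w (x + (int p - k)) (x + (int p - k) + k)" for x k
    using wNN[of "x + (int p - k)" "x + (int p - k) + k"] by (simp add: ac_simps)
  have cardK: "card K = p" unfolding K_def by simp
  have a: "(\<Sum>i\<in>I. w (i - k) i) = (\<Sum>m\<in>I. w m (m + k))" for k
  proof -
    have "(\<Sum>i\<in>I. (\<lambda>m. w m (m + k)) (i + (-k))) = (\<Sum>i\<in>I. (\<lambda>m. w m (m + k)) i)"
      unfolding I_def by (rule win) (simp add: hN)
    then show ?thesis by simp
  qed
  have b: "(\<Sum>i\<in>I. w (i + int p - k) i) = (\<Sum>m\<in>I. w m (m + k))" for k
  proof -
    have "(\<Sum>i\<in>I. (\<lambda>m. w m (m + k)) (i + (int p - k))) = (\<Sum>i\<in>I. (\<lambda>m. w m (m + k)) i)"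
      unfolding I_def by (rule win) (simp add: hN)
    moreover have "w (i + (int p - k)) (i + (int p - k) + k) = w (i + int p - k) i" for i
      using wp[of "i + int p - k" i] by (simp add: algebra_simps)
    ultimately show ?thesis by simp
  qed
  have c: "(\<Sum>k\<in>K. \<Sum>m\<in>I. w m (m + k)) = 0"
  proof -
    have "(\<Sum>k\<in>K. \<Sum>m\<in>I. w m (m + k)) = (\<Sum>m\<in>I. \<Sum>k\<in>K. w m (m + k))" by (rule sum.swap)
    also have "\<dots> = (\<Sum>m\<in>I. \<Sum>j\<in>{1..int p}. w m j)"
      unfolding K_def by (rule sum.cong[OF refl], rule win0) (simp add: wp)
    also have "\<dots> = 0" by (simp add: w0)
    finally show ?thesis .
  qed
  have d: "(\<Sum>k\<in>K. \<Sum>i\<in>I. 2 * w i i - w (i - k) i - w (i + int p - k) i) = 2 * real p * S"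
  proof -
    have "(\<Sum>k\<in>K. \<Sum>i\<in>I. 2 * w i i - w (i - k) i - w (i + int p - k) i)
        = (\<Sum>k\<in>K. 2 * S - (\<Sum>m\<in>I. w m (m + k)) - (\<Sum>m\<in>I. w m (m + k)))"
    proof (rule sum.cong[OF refl])
      fix k
      have "(\<Sum>i\<in>I. 2 * w i i - w (i - k) i - w (i + int p - k) i)
          = 2 * S - (\<Sum>i\<in>I. w (i - k) i) - (\<Sum>i\<in>I. w (i + int p - k) i)"
        by (simp add: sum_subtractf sum_distrib_left S_def)
      then show "(\<Sum>i\<in>I. 2 * w i i - w (i - k) i - w (i + int p - k) i)
          = 2 * S - (\<Sum>m\<in>I. w m (m + k)) - (\<Sum>m\<in>I. w m (m + k))"
        by (simp only: a b)
    qed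
    also have "\<dots> = (\<Sum>k\<in>K. 2 * S - 2 * (\<Sum>m\<in>I. w m (m + k)))" by simp
    also have "\<dots> = (\<Sum>k\<in>K. 2 * S) - 2 * (\<Sum>k\<in>K. \<Sum>m\<in>I. w m (m + k))"
      by (simp only: sum_subtractf sum_distrib_left)
    also have "\<dots> = 2 * real p * S" using c cardK by simp
    finally show ?thesis .
  qed
  define D where "D = (\<lambda>e j. \<bar>w (e+1) j - w e j\<bar>)"
  have hD: "D (x + int N + t) (x + int N + k) = D (x + t) (x + k)" for x t k
    unfolding D_def using wNN[of "x+t+1" "x+k"] wNN[of "x+t" "x+k"] by (simp add: ac_simps)
  have hH: "D (x + int N) j = D x j" for x j
    unfolding D_def using wN[of "x+1" j] wN[of x j] by (simp add: ac_simps)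
  have e: "\<bar>2 * w i i - w (i - k) i - w (i + int p - k) i\<bar> \<le> (\<Sum>t\<in>K. D (i - k + t) i)"
    if "k \<in> K" for i k
  proof -
    have "\<bar>2 * (\<lambda>x. w x i) i - (\<lambda>x. w x i) (i - k) - (\<lambda>x. w x i) (i - k + int p)\<bar>
       \<le> (\<Sum>t\<in>{0..<int p}. \<bar>(\<lambda>x. w x i) (i - k + t + 1) - (\<lambda>x. w x i) (i - k + t)\<bar>)"
      by (rule path2) (use that in \<open>auto simp: K_def\<close>)
    then show ?thesis by (simp add: D_def K_def algebra_simps)
  qed
  have f: "(\<Sum>k\<in>K. \<Sum>i\<in>I. \<Sum>t\<in>K. D (i - k + t) i) = real p * T"
  proof -
    have f1: "(\<Sum>i\<in>I. D (i - k + t) i) = (\<Sum>m\<in>I. D (m + t) (m + k))" for k t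
    proof -
      have "(\<Sum>i\<in>I. (\<lambda>m. D (m + t) (m + k)) (i + (-k))) = (\<Sum>i\<in>I. (\<lambda>m. D (m + t) (m + k)) i)"
        unfolding I_def by (rule win) (simp add: hD)
      then show ?thesis by (simp add: algebra_simps)
    qed
    have f2: "(\<Sum>k\<in>K. D e (m + k)) = (\<Sum>j\<in>{1..int p}. D e j)" for e m
      unfolding K_def by (rule win0) (simp add: D_def wp)
    have f3: "(\<Sum>m\<in>I. (\<Sum>j\<in>{1..int p}. D (m + t) j)) = T" for t
    proof -
      have "(\<Sum>m\<in>I. (\<lambda>e. \<Sum>j\<in>{1..int p}. D e j) (m + t)) = (\<Sum>m\<in>I. (\<lambda>e. \<Sum>j\<in>{1..int p}. D e j) m)"
        unfolding I_def by (rule win) (simp add: hH)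
      then show ?thesis by (simp add: T_def D_def)
    qed
    have "(\<Sum>k\<in>K. \<Sum>i\<in>I. \<Sum>t\<in>K. D (i - k + t) i) = (\<Sum>k\<in>K. \<Sum>t\<in>K. \<Sum>i\<in>I. D (i - k + t) i)"
      by (rule sum.cong[OF refl], rule sum.swap)
    also have "\<dots> = (\<Sum>k\<in>K. \<Sum>t\<in>K. \<Sum>m\<in>I. D (m + t) (m + k))" by (simp add: f1)
    also have "\<dots> = (\<Sum>t\<in>K. \<Sum>m\<in>I. \<Sum>k\<in>K. D (m + t) (m + k))"
      by (subst sum.swap, rule sum.cong[OF refl], rule sum.swap)
    also have "\<dots> = (\<Sum>t\<in>K. \<Sum>m\<in>I. \<Sum>j\<in>{1..int p}. D (m + t) j)" by (simp add: f2)
    also have "\<dots> = (\<Sum>t\<in>K. T)" by (simp add: f3)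
    also have "\<dots> = real p * T" using cardK by simp
    finally show ?thesis .
  qed
  have "2 * real p * \<bar>S\<bar> = \<bar>\<Sum>k\<in>K. \<Sum>i\<in>I. 2 * w i i - w (i - k) i - w (i + int p - k) i\<bar>"
    using d by (simp add: abs_mult)
  also have "\<dots> \<le> (\<Sum>k\<in>K. \<Sum>i\<in>I. \<bar>2 * w i i - w (i - k) i - w (i + int p - k) i\<bar>)"
    by (rule order_trans[OF sum_abs sum_mono], rule sum_abs)
  also have "\<dots> \<le> (\<Sum>k\<in>K. \<Sum>i\<in>I. \<Sum>t\<in>K. D (i - k + t) i)"
    by (rule sum_mono, rule sum_mono, rule e)
  also have "\<dots> = real p * T" by (rule f)
  finally have "2 * real p * \<bar>S\<bar> \<le> real p * T" .
  then have "\<bar>S\<bar> \<le> T / 2" using pp by (simp add: mult.assoc)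
  then show ?thesis by (simp add: S_def T_def I_def)
qed


lemma cell_lemma:
  fixes psi chi :: "int \<Rightarrow> int \<Rightarrow> real" and N p :: nat
  assumes pp: "p > 0" and pos: "\<And>i j. psi i j > 0"
    and cp: "cell_problem N p psi chi"
  shows "psi i i * (1 + DY chi i i) = hom_coeff p psi i"
proof -
  define h where "h j = psi i j * (1 + DY chi i j)" for j
  have chip: "chi i (x + int p) = chi i x" for x using cp by (simp add: cell_problem_def twoscale_def)
  have step: "h (j + 1) = h j" for j
  proof -
    have "- DY (\<lambda>i j. psi i j * DY chi i j) i j = DY psi i j" using cp by (simp add: cell_problem_def)
    then show ?thesis unfolding h_def DY_def by (simp add: algebra_simps)
  qed
  have hc: "h j = h 0" for j
  proof (induct j rule: int_induct[where k=0])
    case base then show ?case by simp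
  next
    case (step1 i) then show ?case using step[of i] by simp
  next
    case (step2 i) then show ?case using step[of "i - 1"] by simp
  qed
  have dy0: "(\<Sum>j\<in>{1..int p}. DY chi i j) = 0"
  proof -
    have "(\<Sum>j\<in>{1..int p}. chi i (j + 1)) = (\<Sum>j\<in>{1..int p}. chi i j)"
      by (rule win) (simp add: chip)
    then show ?thesis by (simp add: DY_def sum_subtractf)
  qed
  have e1: "1 + DY chi i j = h 0 * (1 / psi i j)" for j
    using hc[of j] pos[of i j] unfolding h_def by (simp add: field_simps)
  have "(\<Sum>j\<in>{1..int p}. 1 + DY chi i j) = real p" using dy0 by (simp add: sum.distrib)
  then have sp: "h 0 * (\<Sum>j\<in>{1..int p}. 1 / psi i j) = real p"
    by (simp add: e1 sum_distrib_left)
  have "hom_coeff p psi i = real p / (\<Sum>j\<in>{1..int p}. 1 / psi i j)"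
    by (simp add: hom_coeff_def avgY_def)
  also have "\<dots> = h 0" using sp pp
    by (metis div_by_0 mult_eq_0_iff nonzero_mult_div_cancel_right of_nat_0_less_iff order_less_irrefl)
  also have "\<dots> = psi i i * (1 + DY chi i i)" using hc[of i] by (simp add: h_def)
  finally show ?thesis by simp
qed


theorem lemma4p4:
  fixes eps c_psi C_psi :: real and N p :: nat
    and f u u0 :: "int \<Rightarrow> real" and psi chi :: "int \<Rightarrow> int \<Rightarrow> real"
  assumes "eps > 0" and "N > 0" and "p > 0"
    and "p dvd N"
    and "twoscale N p psi"
    and "0 < c_psi" and "\<And>i j. c_psi \<le> psi i j" and "\<And>i j. psi i j \<le> C_psi"
    and "per N f" and "avgX N f = 0"
    and "atomistic_sol eps N (osc psi) f u"
    and "atomistic_sol eps N (hom_coeff p psi) f u0"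
    and "cell_problem N p psi chi"
  shows "per N (corrector eps chi u0)
    \<and> \<bar>avgX N (corrector eps chi u0)\<bar>
        \<le> eps\<^sup>2 * (real p / 2) * L1Np N p (DX eps (\<lambda>i j. chi i j * Dd eps u0 i))
    \<and> H1semi eps N (\<lambda>i. corrector eps chi u0 i - u i)
        \<le> eps * (C_psi / c_psi) * L2N N (DX eps (TY (\<lambda>i j. chi i j * Dd eps u0 i)))"
proof -
  note A = assms
  have epos: "eps > 0" and Npos: "N > 0" and ppos: "p > 0" using assms by auto
  have pos: "\<And>i j. psi i j > 0" using A(6,7) by (meson less_le_trans)
  have uper: "per N u" and u0per: "per N u0" and u0avg: "avgX N u0 = 0"
    using A(11,12) by (auto simp: atomistic_sol_def)
  have chiN: "chi (i + int N) j = chi i j" and chip: "chi i (j + int p) = chi i j" for i j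
    using A(13) by (auto simp: cell_problem_def twoscale_def)
  obtain q where q: "N = p * q" using A(4) by auto
  have chiNj: "chi i (j + int N) = chi i j" for i j
    using per_mult[of "chi i" p j q] chip q by simp
  define w where "w i j = chi i j * Dd eps u0 i" for i j
  have Du0per: "Dd eps u0 (i + int N) = Dd eps u0 i" for i
    using u0per unfolding per_def Dd_def by (metis add.commute add.left_commute)
  have wN: "w (i + int N) j = w i j" for i j by (simp add: w_def chiN Du0per)
  have wp: "w i (j + int p) = w i j" for i j by (simp add: w_def chip)
  have w0: "(\<Sum>j\<in>{1..int p}. w i j) = 0" for i
  proof -
    have "avgY p chi i = 0" using A(13) by (simp add: cell_problem_def)
    then have "(\<Sum>j\<in>{1..int p}. chi i j) = 0" using ppos by (simp add: avgY_def)
    then show ?thesis by (simp add: w_def flip: sum_distrib_right)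
  qed
  have corr: "corrector eps chi u0 i = u0 i + eps * w i i" for i
    by (simp add: corrector_def w_def)
  have P1: "per N (corrector eps chi u0)"
    unfolding per_def corr
  proof
    fix i
    have "w (i + int N) (i + int N) = w i i" using wN[of i "i + int N"] chiNj by (simp add: w_def)
    then show "u0 (i + int N) + eps * w (i + int N) (i + int N) = u0 i + eps * w i i"
      using u0per by (simp add: per_def)
  qed
  define S where "S = (\<Sum>i\<in>{1..int N}. w i i)"
  define T where "T = (\<Sum>i\<in>{1..int N}. \<Sum>j\<in>{1..int p}. \<bar>w (i+1) j - w i j\<bar>)"
  have ST: "\<bar>S\<bar> \<le> T / 2" unfolding S_def T_def
    by (rule diag_bound[OF A(4) ppos]) (auto simp: wN wp w0)
  have su0: "(\<Sum>i\<in>{1..int N}. u0 i) = 0" using u0avg Npos by (simp add: avgX_def)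
  have avg: "avgX N (corrector eps chi u0) = eps * S / real N"
    by (simp add: avgX_def corr sum.distrib su0 S_def flip: sum_distrib_left)
  have L1: "L1Np N p (DX eps w) = T / eps / (real N * real p)"
  proof -
    have "(\<Sum>i\<in>{1..int N}. \<Sum>j\<in>{1..int p}. \<bar>DX eps w i j\<bar>) = T / eps"
      unfolding T_def DX_def using epos by (simp add: sum_divide_distrib)
    then show ?thesis by (simp add: L1Np_def)
  qed
  have P2: "\<bar>avgX N (corrector eps chi u0)\<bar> \<le> eps\<^sup>2 * (real p / 2) * L1Np N p (DX eps w)"
  proof -
    have r: "eps\<^sup>2 * (real p / 2) * L1Np N p (DX eps w) = eps * (T / 2) / real N"
      using epos ppos Npos unfolding L1 by (simp add: field_simps power2_eq_square)
    have "\<bar>avgX N (corrector eps chi u0)\<bar> = eps * \<bar>S\<bar> / real N"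
      using epos by (simp add: avg abs_mult)
    also have "\<dots> \<le> eps * (T / 2) / real N"
      using ST epos Npos by (intro divide_right_mono mult_left_mono) auto
    finally show ?thesis using r by simp
  qed
  define E where "E i = corrector eps chi u0 i - u i" for i
  define g where "g i = DX eps (TY w) i i" for i
  define hc where "hc = hom_coeff p psi"
  have Eper: "per N E" using P1 uper by (simp add: per_def E_def)
  have key: "psi i i * Dd eps E i = hc i * Dd eps u0 i + eps * (psi i i * g i) - psi i i * Dd eps u i" for i
  proof -
    have c: "psi i i * (1 + DY chi i i) = hc i" unfolding hc_def
      by (rule cell_lemma[OF ppos pos A(13)])
    have "Dd eps E i = Dd eps u0 i * (1 + DY chi i i) + eps * g i - Dd eps u i"
      using epos by (simp add: Dd_def E_def corr g_def DX_def TY_def DY_def w_def field_simps)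
    then have "psi i i * Dd eps E i = psi i i * (Dd eps u0 i * (1 + DY chi i i) + eps * g i - Dd eps u i)"
      by simp
    then have "psi i i * Dd eps E i = (psi i i * (1 + DY chi i i)) * Dd eps u0 i + eps * (psi i i * g i) - psi i i * Dd eps u i"
      by (simp add: algebra_simps)
    then show ?thesis using c by simp
  qed
  define I where "I = {1..int N}"
  have weak: "(\<Sum>i\<in>I. psi i i * Dd eps u i * Dd eps E i) = (\<Sum>i\<in>I. hc i * Dd eps u0 i * Dd eps E i)"
  proof -
    have "ipX N (\<lambda>i. osc psi i * Dd eps u i) (Dd eps E) = ipX N f E"
      using A(11) Eper by (simp add: atomistic_sol_def)
    moreover have "ipX N (\<lambda>i. hc i * Dd eps u0 i) (Dd eps E) = ipX N f E"
      using A(12) Eper by (simp add: atomistic_sol_def hc_def)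
    ultimately show ?thesis using Npos by (simp add: ipX_def osc_def I_def)
  qed
  define Aa where "Aa = (\<Sum>i\<in>I. (Dd eps E i)\<^sup>2)"
  define G where "G = (\<Sum>i\<in>I. (g i)\<^sup>2)"
  define X where "X = (\<Sum>i\<in>I. (psi i i * g i) * Dd eps E i)"
  have energy: "(\<Sum>i\<in>I. psi i i * (Dd eps E i)\<^sup>2) = eps * X"
  proof -
    have "(\<Sum>i\<in>I. psi i i * (Dd eps E i)\<^sup>2) = (\<Sum>i\<in>I. (psi i i * Dd eps E i) * Dd eps E i)"
      by (simp add: power2_eq_square mult.assoc)
    also have "\<dots> = (\<Sum>i\<in>I. hc i * Dd eps u0 i * Dd eps E i + eps * ((psi i i * g i) * Dd eps E i) - psi i i * Dd eps u i * Dd eps E i)"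
      by (simp add: key algebra_simps)
    also have "\<dots> = eps * X" using weak
      by (simp add: sum.distrib sum_subtractf X_def sum_distrib_left)
    finally show ?thesis .
  qed
  have cA: "c_psi * Aa \<le> eps * X"
  proof -
    have "c_psi * Aa = (\<Sum>i\<in>I. c_psi * (Dd eps E i)\<^sup>2)" by (simp add: Aa_def sum_distrib_left)
    also have "\<dots> \<le> (\<Sum>i\<in>I. psi i i * (Dd eps E i)\<^sup>2)"
      by (rule sum_mono, rule mult_right_mono) (auto simp: A(7))
    finally show ?thesis using energy by simp
  qed
  have Aa0: "Aa \<ge> 0" by (simp add: Aa_def sum_nonneg)
  have G0: "G \<ge> 0" by (simp add: G_def sum_nonneg)
  have CS: "X\<^sup>2 \<le> (\<Sum>i\<in>I. (psi i i * g i)\<^sup>2) * Aa"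
    unfolding X_def Aa_def by (rule Cauchy_Schwarz_ineq_sum)
  have PG: "(\<Sum>i\<in>I. (psi i i * g i)\<^sup>2) \<le> C_psi\<^sup>2 * G"
  proof -
    have "(\<Sum>i\<in>I. (psi i i * g i)\<^sup>2) \<le> (\<Sum>i\<in>I. C_psi\<^sup>2 * (g i)\<^sup>2)"
    proof (rule sum_mono)
      fix i
      have "(psi i i)\<^sup>2 \<le> C_psi\<^sup>2" using pos[of i i] A(8)[of i i] by (simp add: power_mono)
      then show "(psi i i * g i)\<^sup>2 \<le> C_psi\<^sup>2 * (g i)\<^sup>2"
        by (simp add: power_mult_distrib mult_right_mono)
    qed
    then show ?thesis by (simp add: G_def sum_distrib_left)
  qed
  have Abound: "Aa \<le> (eps * (C_psi / c_psi))\<^sup>2 * G"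
  proof (cases "Aa = 0")
    case True then show ?thesis using G0 by simp
  next
    case False
    then have Apos: "Aa > 0" using Aa0 by simp
    have "(c_psi * Aa)\<^sup>2 \<le> (eps * X)\<^sup>2"
      using cA A(6) Aa0 by (intro power_mono) auto
    also have "\<dots> = eps\<^sup>2 * X\<^sup>2" by (simp add: power_mult_distrib)
    also have "\<dots> \<le> eps\<^sup>2 * (C_psi\<^sup>2 * G * Aa)"
      using CS PG Aa0 by (intro mult_left_mono) (auto intro: order_trans mult_right_mono)
    finally have "c_psi\<^sup>2 * Aa * Aa \<le> (eps\<^sup>2 * C_psi\<^sup>2 * G) * Aa"
      by (simp add: power2_eq_square algebra_simps)
    then have "c_psi\<^sup>2 * Aa \<le> eps\<^sup>2 * C_psi\<^sup>2 * G" using Apos by simp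
    then show ?thesis using A(6) by (simp add: field_simps power_mult_distrib power_divide)
  qed
  have P3: "H1semi eps N E \<le> eps * (C_psi / c_psi) * L2N N (DX eps (TY w))"
  proof -
    have k0: "eps * (C_psi / c_psi) \<ge> 0" using epos A(6) A(7)[of 0 0] A(8)[of 0 0] by simp
    have "H1semi eps N E = sqrt (Aa / real N)" by (simp add: H1semi_def Aa_def I_def)
    also have "\<dots> \<le> sqrt ((eps * (C_psi / c_psi))\<^sup>2 * G / real N)"
      using Abound Npos by (simp add: divide_right_mono)
    also have "\<dots> = eps * (C_psi / c_psi) * sqrt (G / real N)"
    proof -
      have "(eps * (C_psi / c_psi))\<^sup>2 * G / real N = (eps * (C_psi / c_psi))\<^sup>2 * (G / real N)" by simp
      then show ?thesis using k0 by (simp only: real_sqrt_mult real_sqrt_abs abs_of_nonneg)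
    qed
    also have "\<dots> = eps * (C_psi / c_psi) * L2N N (DX eps (TY w))"
      by (simp add: L2N_def G_def g_def I_def)
    finally show ?thesis .
  qed
  show ?thesis using P1 P2 P3 unfolding w_def E_def by simp
qed

end
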